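(* For $\lambda,\mu,\nu\in\mathcal{A}_{k,n}$, $$N^\nu_{\lambda\mu}=\sum_{\boldsymbol{\nu}}c^{\boldsymbol{\nu}}_{\boldsymbol{\lambda}\boldsymbol{\mu}}\frac{f_{\boldsymbol{\nu}}}{f_{\boldsymbol{\lambda}}f_{\boldsymbol{\mu}}},$$ where the sum runs over all $n$-multipartitions $\boldsymbol{\nu}$ with $|\nu^{(i)}|=m_i(\nu)$ for $i=1,\dots,n$, and $\boldsymbol{\lambda},\boldsymbol{\mu}$ are any $n$-multipartitions with $|\lambda^{(i)}|=m_i(\lambda)$ and $|\mu^{(i)}|=m_i(\mu)$ for all $i$.
   Context: Fix $k,n\ge1$ and a primitive $n$-th root of unity $\zeta$. $\mathcal{A}_{k,n}$ is the set of integer vectors $\lambda=(\lambda_1,\dots,\lambda_k)$ with $n\ge\lambda_1\ge\cdots\ge\lambda_k>0$; $m_i(\lambda)$ is the multiplicity of $i$, $|\lambda|=\sum\lambda_i$; $S_\lambda$ is its stabiliser in $S_k$ under $\lambda\circ w=(\lambda_{w(1)},\dots,\lambda_{w(k)})$ and $S^\lambda$ the minimal length representatives of $S_\lambda\backslash S_k$. $N^\nu_{\lambda\mu}=\#\{(w,w')\in S^\lambda\times S^\mu:\lambda\circ w+\mu\circ w'=(\nu_i+n\alpha_i)_{i=1}^k\text{ for some }\alpha\in\mathbb{Z}^k,\ \sum\alpha_i=(|\lambda|+|\mu|-|\nu|)/n\}$. The generalised symmetric group is $S(n,k)=\mathcal{C}_n^{\times k}\rtimes S_k$ ($\mathcal{C}_n$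 cyclic of order $n$); $y_i$ denotes the generator of the $i$-th copy of $\mathcal{C}_n$ and $y^\alpha=y_1^{\alpha_1}\cdots y_k^{\alpha_k}$. An $n$-multipartition of $k$ is $\boldsymbol{\lambda}=(\lambda^{(1)},\dots,\lambda^{(n)})$ with $\sum|\lambda^{(i)}|=k$; $f_{\boldsymbol{\lambda}}=\prod_if_{\lambda^{(i)}}$ with $f_{\lambda^{(i)}}$ the number of standard Young tableaux of shape $\lambda^{(i)}$. The simple $S(n,k)$-modules $\mathcal{L}(\boldsymbol{\lambda})$ are labelled by $n$-multipartitions of $k$ so that $\operatorname{Tr}_{\mathcal{L}(\boldsymbol{\lambda})}y^\alpha=f_{\boldsymbol{\lambda}}\,m_\lambda(\zeta^\alpha)$ for all $\alpha\in\mathbb{Z}_n^{k}$, where $\lambda\in\mathcal{A}_{k,n}$ is the unique element with $m_i(\lambda)=|\lambda^{(i)}|$ and $m_\lambda(\zeta^\alpha)$ is the monomial symmetric polynomial evaluated at $(\zeta^{\alpha_1},\dots,\zeta^{\alpha_k})$. $c^{\boldsymbol{\nu}}_{\boldsymbol{\lambda}\boldsymbol{\mu}}$ are the structure constants of the representation ring: $\mathcal{L}(\boldsymbol{\lambda})\otimes\mathcal{L}(\boldsymbol{\mu})\cong\bigoplus_{\boldsymbol{\nu}}\mathcal{L}(\boldsymbol{\nu})^{\oplus c^{\boldsymbol{\nu}}_{\boldsymbol{\lambda}\boldsymbol{\mu}}}$. *)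

theory Defs
  imports Complex_Main "HOL-Combinatorics.Permutations" "Jordan_Normal_Form.Matrix"
begin

text \<open>Integer vectors are functions on the index set {1..k}, extended by 0 outside.\<close>

definition Akn :: "nat \<Rightarrow> nat \<Rightarrow> (nat \<Rightarrow> nat) set" where
  "Akn k n = {lam. (\<forall>i\<in>{1..k}. 0 < lam i \<and> lam i \<le> n) \<and>
                   (\<forall>i j. 1 \<le> i \<longrightarrow> i \<le> j \<longrightarrow> j \<le> k \<longrightarrow> lam j \<le> lam i) \<and>
                   (\<forall>i. i \<notin> {1..k} \<longrightarrow> lam i = 0)}"

definition mult_of :: "nat \<Rightarrow> (nat \<Rightarrow> nat) \<Rightarrow> nat \<Rightarrow> nat" where
  "mult_of k lam i = card {j\<in>{1..k}. lam j = i}"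

definition vsize :: "nat \<Rightarrow> (nat \<Rightarrow> nat) \<Rightarrow> nat" where
  "vsize k lam = (\<Sum>i=1..k. lam i)"

text \<open>Permutations of {1..k}, acting by lam o w = (lam (w 1), ..., lam (w k)).\<close>

definition Sk :: "nat \<Rightarrow> (nat \<Rightarrow> nat) set" where
  "Sk k = {w. w permutes {1..k}}"

definition stab :: "nat \<Rightarrow> (nat \<Rightarrow> nat) \<Rightarrow> (nat \<Rightarrow> nat) set" where
  "stab k lam = {u \<in> Sk k. lam \<circ> u = lam}"

definition perm_length :: "nat \<Rightarrow> (nat \<Rightarrow> nat) \<Rightarrow> nat" where
  "perm_length k w = card {(i, j). 1 \<le> i \<and> i < j \<and> j \<le> k \<and> w j < w i}"

text \<open>Minimal length representatives of the right cosets S_lam w = {u o w | u in S_lam}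
  (note lam o (u o w) = (lam o u) o w).\<close>
definition min_reps :: "nat \<Rightarrow> (nat \<Rightarrow> nat) \<Rightarrow> (nat \<Rightarrow> nat) set" where
  "min_reps k lam = {w \<in> Sk k. \<forall>u \<in> stab k lam. perm_length k w \<le> perm_length k (u \<circ> w)}"

definition Ncoef :: "nat \<Rightarrow> nat \<Rightarrow> (nat \<Rightarrow> nat) \<Rightarrow> (nat \<Rightarrow> nat) \<Rightarrow> (nat \<Rightarrow> nat) \<Rightarrow> nat" where
  "Ncoef k n nu lam mu = card {(w, w'). w \<in> min_reps k lam \<and> w' \<in> min_reps k mu \<and>
      (\<exists>\<alpha> :: nat \<Rightarrow> int.
         (\<forall>i\<in>{1..k}. int (lam (w i)) + int (mu (w' i)) = int (nu i) + int n * \<alpha> i) \<and>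
         int n * (\<Sum>i=1..k. \<alpha> i) = int (vsize k lam) + int (vsize k mu) - int (vsize k nu))}"

text \<open>Monomial symmetric polynomial m_lam evaluated at (x_1,...,x_k):
  sum over the distinct rearrangements beta of lam of prod x_i ^ beta_i.\<close>
definition monsym :: "nat \<Rightarrow> (nat \<Rightarrow> nat) \<Rightarrow> (nat \<Rightarrow> complex) \<Rightarrow> complex" where
  "monsym k lam x = (\<Sum>\<beta>\<in>{lam \<circ> w | w. w \<in> Sk k}. \<Prod>i=1..k. x i ^ \<beta> i)"

definition is_partition :: "nat list \<Rightarrow> bool" where
  "is_partition p \<longleftrightarrow> sorted_wrt (\<ge>) p \<and> (\<forall>x\<in>set p. 0 < x)"

definition cells :: "nat list \<Rightarrow> (nat \<times> nat) set" where
  "cells p = {(i, j). i < length p \<and> j < p ! i}"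

definition SYT :: "nat list \<Rightarrow> (nat \<times> nat \<Rightarrow> nat) set" where
  "SYT p = {T. bij_betw T (cells p) {1..sum_list p} \<and>
               (\<forall>c. c \<notin> cells p \<longrightarrow> T c = 0) \<and>
               (\<forall>i j. (i, Suc j) \<in> cells p \<longrightarrow> T (i, j) < T (i, Suc j)) \<and>
               (\<forall>i j. (Suc i, j) \<in> cells p \<longrightarrow> T (i, j) < T (Suc i, j))}"

definition fSYT :: "nat list \<Rightarrow> nat" where
  "fSYT p = card (SYT p)"

definition multipartitions :: "nat \<Rightarrow> nat \<Rightarrow> (nat \<Rightarrow> nat list) set" where
  "multipartitions n k = {P. (\<forall>i\<in>{1..n}. is_partition (P i)) \<and> (\<forall>i. i \<notin> {1..n} \<longrightarrow> P i = []) \<and>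
                              (\<Sum>i=1..n. sum_list (P i)) = k}"

definition fmulti :: "nat \<Rightarrow> (nat \<Rightarrow> nat list) \<Rightarrow> nat" where
  "fmulti n P = (\<Prod>i=1..n. fSYT (P i))"

text \<open>The unique element of A_{k,n} attached to a multipartition: m_i(lam) = |lam^(i)|.\<close>
definition has_shape :: "nat \<Rightarrow> nat \<Rightarrow> (nat \<Rightarrow> nat list) \<Rightarrow> (nat \<Rightarrow> nat) \<Rightarrow> bool" where
  "has_shape k n P lam \<longleftrightarrow> (\<forall>i\<in>{1..n}. sum_list (P i) = mult_of k lam i)"

text \<open>Elements (alpha, w): alpha in Z_n^k (values in {0..<n} on {1..k}, 0 outside),
  w a permutation of {1..k}; multiplication of the semidirect product
  (alpha, w)(beta, v) = (alpha + w.beta, w o v) with (w.beta)_i = beta_(w^-1 i).\<close>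

type_synonym gsym = "(nat \<Rightarrow> nat) \<times> (nat \<Rightarrow> nat)"

definition Snk :: "nat \<Rightarrow> nat \<Rightarrow> gsym set" where
  "Snk n k = {(\<alpha>, w). (\<forall>i\<in>{1..k}. \<alpha> i < n) \<and> (\<forall>i. i \<notin> {1..k} \<longrightarrow> \<alpha> i = 0) \<and> w permutes {1..k}}"

definition gmult :: "nat \<Rightarrow> nat \<Rightarrow> gsym \<Rightarrow> gsym \<Rightarrow> gsym" where
  "gmult n k g h = (case g of (\<alpha>, w) \<Rightarrow> case h of (\<beta>, v) \<Rightarrow>
     ((\<lambda>i. if i \<in> {1..k} then (\<alpha> i + \<beta> (Hilbert_Choice.inv w i)) mod n else 0), w \<circ> v))"

definition gone :: gsym where
  "gone = ((\<lambda>_. 0), id)"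

definition ypow :: "(nat \<Rightarrow> nat) \<Rightarrow> gsym" where
  "ypow \<alpha> = (\<alpha>, id)"

type_synonym rep = "nat \<times> (gsym \<Rightarrow> complex mat)"

definition is_rep :: "nat \<Rightarrow> nat \<Rightarrow> rep \<Rightarrow> bool" where
  "is_rep n k R \<longleftrightarrow> (case R of (d, \<rho>) \<Rightarrow>
     (\<forall>g\<in>Snk n k. \<rho> g \<in> carrier_mat d d) \<and> \<rho> gone = 1\<^sub>m d \<and>
     (\<forall>g\<in>Snk n k. \<forall>h\<in>Snk n k. \<rho> (gmult n k g h) = \<rho> g * \<rho> h))"

definition is_subspace :: "nat \<Rightarrow> complex vec set \<Rightarrow> bool" where
  "is_subspace d W \<longleftrightarrow> W \<subseteq> carrier_vec d \<and> 0\<^sub>v d \<in> W \<and>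
     (\<forall>v\<in>W. \<forall>w\<in>W. v + w \<in> W) \<and> (\<forall>c. \<forall>v\<in>W. c \<cdot>\<^sub>v v \<in> W)"

definition irreducible_rep :: "nat \<Rightarrow> nat \<Rightarrow> rep \<Rightarrow> bool" where
  "irreducible_rep n k R \<longleftrightarrow> is_rep n k R \<and> (case R of (d, \<rho>) \<Rightarrow> 0 < d \<and>
     (\<forall>W. is_subspace d W \<and> (\<forall>g\<in>Snk n k. \<forall>v\<in>W. \<rho> g *\<^sub>v v \<in> W) \<longrightarrow>
          W = {0\<^sub>v d} \<or> W = carrier_vec d))"

definition iso_rep :: "nat \<Rightarrow> nat \<Rightarrow> rep \<Rightarrow> rep \<Rightarrow> bool" where
  "iso_rep n k R S \<longleftrightarrow> fst R = fst S \<and>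
     (\<exists>P \<in> carrier_mat (fst R) (fst R). invertible_mat P \<and>
        (\<forall>g\<in>Snk n k. P * snd R g = snd S g * P))"

definition kron :: "complex mat \<Rightarrow> complex mat \<Rightarrow> complex mat" where
  "kron A B = mat (dim_row A * dim_row B) (dim_col A * dim_col B)
     (\<lambda>(i, j). A $$ (i div dim_row B, j div dim_col B) * B $$ (i mod dim_row B, j mod dim_col B))"

definition tensor_rep :: "rep \<Rightarrow> rep \<Rightarrow> rep" where
  "tensor_rep R S = (fst R * fst S, \<lambda>g. kron (snd R g) (snd S g))"

definition dsum_rep :: "rep \<Rightarrow> rep \<Rightarrow> rep" where
  "dsum_rep R S = (fst R + fst S,
     \<lambda>g. four_block_mat (snd R g) (0\<^sub>m (fst R) (fst S)) (0\<^sub>m (fst S) (fst R)) (snd S g))"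

definition zero_rep :: rep where
  "zero_rep = (0, \<lambda>_. 1\<^sub>m 0)"

definition dsum_list :: "rep list \<Rightarrow> rep" where
  "dsum_list Rs = foldr dsum_rep Rs zero_rep"

definition mat_trace :: "complex mat \<Rightarrow> complex" where
  "mat_trace A = (\<Sum>i<dim_row A. A $$ (i, i))"

end

theory Submission
  imports Defs
begin

lemma mat_trace_comm:
  assumes A: "A \<in> carrier_mat n m" and B: "B \<in> carrier_mat m n"
  shows "mat_trace (A * B) = mat_trace (B * A)"
proof -
  have "mat_trace (A * B) = (\<Sum>i<n. \<Sum>j<m. A $$ (i,j) * B $$ (j,i))"
    using A B by (simp add: mat_trace_def scalar_prod_def row_def col_def atLeast0LessThan)
  also have "\<dots> = (\<Sum>j<m. \<Sum>i<n. B $$ (j,i) * A $$ (i,j))"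
    by (subst sum.swap) (simp add: mult.commute)
  also have "\<dots> = mat_trace (B * A)"
    using A B by (simp add: mat_trace_def scalar_prod_def row_def col_def atLeast0LessThan)
  finally show ?thesis .
qed

lemma mat_trace_sim:
  assumes P: "P \<in> carrier_mat d d" and inv: "invertible_mat P"
    and A: "A \<in> carrier_mat d d" and B: "B \<in> carrier_mat d d"
    and eq: "P * A = B * P"
  shows "mat_trace A = mat_trace B"
proof -
  obtain Q where PQ: "P * Q = 1\<^sub>m d" and QP: "Q * P = 1\<^sub>m (dim_row Q)"
    using inv P unfolding invertible_mat_def inverts_mat_def by auto
  have "dim_col Q = d" using PQ P by (metis index_mult_mat(3) index_one_mat(3))
  moreover have "dim_row Q = d" using QP P by (metis index_mult_mat(3) index_one_mat(3) carrier_matD(2))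
  ultimately have Q: "Q \<in> carrier_mat d d" by auto
  have "A = Q * (B * P)"
  proof -
    have "A = (Q * P) * A" using QP A \<open>dim_row Q = d\<close> by simp
    also have "\<dots> = Q * (P * A)" using Q P A by (simp add: assoc_mult_mat)
    finally show ?thesis using eq by simp
  qed
  hence "mat_trace A = mat_trace ((B * P) * Q)"
    using mat_trace_comm[OF Q, of "B * P"] B P by simp
  also have "(B * P) * Q = B" using B P Q PQ by (simp add: assoc_mult_mat)
  finally show ?thesis .
qed

lemma sum_mult_split: "(\<Sum>i<(a::nat)*b. f (i div b) (i mod b)) = (\<Sum>i<a. \<Sum>j<b. f i j :: complex)"
proof (induction a)
  case 0 then show ?case by simp
next
  case (Suc a)
  have "{..<Suc a * b} = {..<a*b} \<union> {a*b..<a*b+b}" by auto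
  hence "(\<Sum>i<Suc a*b. f (i div b) (i mod b)) = (\<Sum>i<a*b. f (i div b) (i mod b)) + (\<Sum>i\<in>{a*b..<a*b+b}. f (i div b) (i mod b))"
    by (simp add: sum.union_disjoint ivl_disj_int)
  also have "(\<Sum>i\<in>{a*b..<a*b+b}. f (i div b) (i mod b)) = (\<Sum>j<b. f a j)"
  proof -
    have "(\<Sum>i\<in>{a*b..<a*b+b}. f (i div b) (i mod b)) = (\<Sum>j<b. f ((j + a*b) div b) ((j+a*b) mod b))"
      using sum.shift_bounds_nat_ivl[of "\<lambda>i. f (i div b) (i mod b)" 0 "a*b" b] by (simp add: atLeast0LessThan add.commute)
    also have "\<dots> = (\<Sum>j<b. f a j)" by (intro sum.cong) auto
    finally show ?thesis .
  qed
  finally show ?case using Suc by simp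
qed

lemma mat_trace_kron:
  assumes A: "A \<in> carrier_mat a a" and B: "B \<in> carrier_mat b b"
  shows "mat_trace (kron A B) = mat_trace A * mat_trace B"
proof -
  have "mat_trace (kron A B) = (\<Sum>i<a*b. A $$ (i div b, i div b) * B $$ (i mod b, i mod b))"
    using A B by (simp add: mat_trace_def kron_def)
  also have "\<dots> = (\<Sum>i<a. \<Sum>j<b. A $$ (i, i) * B $$ (j, j))" by (rule sum_mult_split)
  also have "\<dots> = mat_trace A * mat_trace B"
    using A B by (simp add: mat_trace_def sum_product)
  finally show ?thesis .
qed

lemma mat_trace_four_block:
  assumes A: "A \<in> carrier_mat a a" and D: "D \<in> carrier_mat d d"
  shows "mat_trace (four_block_mat A (0\<^sub>m a d) (0\<^sub>m d a) D) = mat_trace A + mat_trace D"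
proof -
  have "mat_trace (four_block_mat A (0\<^sub>m a d) (0\<^sub>m d a) D) = (\<Sum>i<a+d. if i < a then A $$ (i,i) else D $$ (i-a,i-a))"
    using A D by (simp add: mat_trace_def four_block_mat_def Let_def, intro sum.cong refl, auto)
  also have "\<dots> = (\<Sum>i<a. A $$ (i,i)) + (\<Sum>i\<in>{a..<a+d}. D $$ (i-a,i-a))"
    by (simp add: sum.atLeastLessThan_concat[of 0 a "a+d", symmetric, simplified atLeast0LessThan[symmetric]] atLeast0LessThan[symmetric])
  also have "(\<Sum>i\<in>{a..<a+d}. D $$ (i-a,i-a)) = (\<Sum>i<d. D $$ (i,i))"
    using sum.shift_bounds_nat_ivl[of "\<lambda>i. D $$ (i-a,i-a)" 0 a d] by (simp add: atLeast0LessThan add.commute)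
  finally show ?thesis using A D by (simp add: mat_trace_def)
qed

lemma dsum_list_props:
  assumes "\<forall>R\<in>set Rs. snd R g \<in> carrier_mat (fst R) (fst R)"
  shows "snd (dsum_list Rs) g \<in> carrier_mat (fst (dsum_list Rs)) (fst (dsum_list Rs)) \<and>
         mat_trace (snd (dsum_list Rs) g) = sum_list (map (\<lambda>R. mat_trace (snd R g)) Rs)"
  using assms
proof (induction Rs)
  case Nil then show ?case by (simp add: dsum_list_def zero_rep_def mat_trace_def)
next
  case (Cons R Rs)
  have IH: "snd (dsum_list Rs) g \<in> carrier_mat (fst (dsum_list Rs)) (fst (dsum_list Rs))"
    "mat_trace (snd (dsum_list Rs) g) = sum_list (map (\<lambda>R. mat_trace (snd R g)) Rs)"
    using Cons by auto
  have R: "snd R g \<in> carrier_mat (fst R) (fst R)" using Cons.prems by auto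
  have eq: "dsum_list (R # Rs) = dsum_rep R (dsum_list Rs)" by (simp add: dsum_list_def)
  show ?case unfolding eq dsum_rep_def using IH R
    by (simp add: mat_trace_four_block)
qed

lemma iso_trace:
  assumes "iso_rep n k R S" "g \<in> Snk n k"
    "snd R g \<in> carrier_mat (fst R) (fst R)" "snd S g \<in> carrier_mat (fst S) (fst S)"
  shows "mat_trace (snd R g) = mat_trace (snd S g)"
proof -
  obtain P where P: "P \<in> carrier_mat (fst R) (fst R)" "invertible_mat P"
    "P * snd R g = snd S g * P" and d: "fst R = fst S"
    using assms(1,2) unfolding iso_rep_def by blast
  show ?thesis using mat_trace_sim[OF P(1,2) assms(3)] assms(4) d P(3) by simp
qed

lemma sum_list_count_gen:
  "sum_list (map f xs) = (\<Sum>x\<in>set xs. of_nat (count_list xs x) * (f x :: complex))"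
proof (induction xs)
  case Nil then show ?case by simp
next
  case (Cons a xs)
  show ?case
  proof (cases "a \<in> set xs")
    case True
    have "(\<Sum>x\<in>set (a#xs). of_nat (count_list (a#xs) x) * f x)
        = (\<Sum>x\<in>set xs. of_nat (count_list xs x) * f x + (if x = a then f x else 0))"
      using True by (intro sum.cong) (auto simp: algebra_simps insert_absorb)
    also have "\<dots> = sum_list (map f xs) + f a"
      using True by (simp add: sum.distrib Cons.IH)
    finally show ?thesis by simp
  next
    case False
    have "(\<Sum>x\<in>set xs. of_nat (count_list (a#xs) x) * f x) = (\<Sum>x\<in>set xs. of_nat (count_list xs x) * f x)"
      using False by (intro sum.cong) auto
    then show ?thesis using False Cons.IH by simp
  qed
qed

lemma char_identity:
  assumes L_irr: "\<forall>R\<in>M. irreducible_rep n k (L R)"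
    and xs: "set xs \<subseteq> M" "iso_rep n k (tensor_rep (L R) (L S)) (dsum_list (map L xs))"
    and RS: "R \<in> M" "S \<in> M" and g: "g \<in> Snk n k"
  shows "mat_trace (snd (L R) g) * mat_trace (snd (L S) g) =
         (\<Sum>T\<in>set xs. of_nat (count_list xs T) * mat_trace (snd (L T) g))"
proof -
  have car: "\<And>T. T \<in> M \<Longrightarrow> snd (L T) g \<in> carrier_mat (fst (L T)) (fst (L T))"
    using L_irr g unfolding irreducible_rep_def is_rep_def by (auto split: prod.splits)
  have cR: "snd (L R) g \<in> carrier_mat (fst (L R)) (fst (L R))" using car RS by auto
  have cS: "snd (L S) g \<in> carrier_mat (fst (L S)) (fst (L S))" using car RS by auto
  have cl: "\<forall>T\<in>set (map L xs). snd T g \<in> carrier_mat (fst T) (fst T)" using car xs(1) by auto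
  note D = dsum_list_props[OF cl]
  have ct: "snd (tensor_rep (L R) (L S)) g \<in> carrier_mat (fst (tensor_rep (L R) (L S))) (fst (tensor_rep (L R) (L S)))"
    using cR cS by (simp add: tensor_rep_def kron_def)
  have "mat_trace (snd (L R) g) * mat_trace (snd (L S) g) = mat_trace (snd (tensor_rep (L R) (L S)) g)"
    using cR cS by (simp add: tensor_rep_def mat_trace_kron)
  also have "\<dots> = mat_trace (snd (dsum_list (map L xs)) g)"
    using iso_trace[OF xs(2) g ct] D by blast
  also have "\<dots> = sum_list (map (\<lambda>T. mat_trace (snd (L T) g)) xs)" using D by (simp add: o_def)
  also have "\<dots> = (\<Sum>T\<in>set xs. of_nat (count_list xs T) * mat_trace (snd (L T) g))"
    by (rule sum_list_count_gen)
  finally show ?thesis .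
qed

definition GG :: "nat set \<Rightarrow> nat \<Rightarrow> (nat \<Rightarrow> nat) set" where
  "GG I n = {\<alpha>. (\<forall>i\<in>I. \<alpha> i < n) \<and> (\<forall>i. i \<notin> I \<longrightarrow> \<alpha> i = 0)}"

lemma GG_insert:
  assumes "x \<notin> I"
  shows "GG (insert x I) n = (\<lambda>(\<alpha>,a). \<alpha>(x:=a)) ` (GG I n \<times> {..<n})"
proof
  show "GG (insert x I) n \<subseteq> (\<lambda>(\<alpha>,a). \<alpha>(x:=a)) ` (GG I n \<times> {..<n})"
  proof
    fix \<beta> assume b: "\<beta> \<in> GG (insert x I) n"
    have "\<beta>(x:=0) \<in> GG I n" using b assms by (auto simp: GG_def)
    moreover have "\<beta> x < n" using b by (auto simp: GG_def)
    moreover have "\<beta> = (\<beta>(x:=0))(x := \<beta> x)" by simp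
    ultimately show "\<beta> \<in> (\<lambda>(\<alpha>,a). \<alpha>(x:=a)) ` (GG I n \<times> {..<n})"
      by (intro image_eqI[where x="(\<beta>(x:=0), \<beta> x)"]) auto
  qed
next
  show "(\<lambda>(\<alpha>,a). \<alpha>(x:=a)) ` (GG I n \<times> {..<n}) \<subseteq> GG (insert x I) n"
    by (auto simp: GG_def)
qed

lemma GG_finite: "finite I \<Longrightarrow> finite (GG I n)"
proof (induction I rule: finite_induct)
  case empty
  have "GG {} n = {\<lambda>_. 0}" by (auto simp: GG_def)
  then show ?case by simp
next
  case (insert x I) then show ?case by (simp add: GG_insert)
qed

lemma GG_prod_sum:
  fixes g :: "nat \<Rightarrow> nat \<Rightarrow> complex"
  assumes "finite I"
  shows "(\<Sum>\<alpha>\<in>GG I n. \<Prod>i\<in>I. g i (\<alpha> i)) = (\<Prod>i\<in>I. \<Sum>a<n. g i a)"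
  using assms
proof (induction I rule: finite_induct)
  case empty
  have "GG {} n = {\<lambda>_. 0}" by (auto simp: GG_def)
  then show ?case by simp
next
  case (insert x I)
  have inj: "inj_on (\<lambda>(\<alpha>,a). \<alpha>(x:=a)) (GG I n \<times> {..<n})"
  proof (rule inj_onI, clarify)
    fix \<alpha> a \<beta> b assume "\<alpha> \<in> GG I n" "\<beta> \<in> GG I n" and e: "\<alpha>(x:=a) = \<beta>(x:=b)"
    then have "\<alpha> x = 0" "\<beta> x = 0" using insert.hyps by (auto simp: GG_def)
    moreover have "a = b" using fun_cong[OF e, of x] by simp
    ultimately show "\<alpha> = \<beta> \<and> a = b" using e by (metis fun_upd_triv fun_upd_upd)
  qed
  have "(\<Sum>\<beta>\<in>GG (insert x I) n. \<Prod>i\<in>insert x I. g i (\<beta> i))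
      = (\<Sum>(\<alpha>,a)\<in>GG I n \<times> {..<n}. \<Prod>i\<in>insert x I. g i ((\<alpha>(x:=a)) i))"
    unfolding GG_insert[OF insert.hyps(2)] sum.reindex[OF inj] by (simp add: case_prod_unfold)
  also have "\<dots> = (\<Sum>(\<alpha>,a)\<in>GG I n \<times> {..<n}. g x a * (\<Prod>i\<in>I. g i (\<alpha> i)))"
  proof (intro sum.cong refl, clarify)
    fix \<alpha> a
    have "(\<Prod>i\<in>I. g i ((\<alpha>(x:=a)) i)) = (\<Prod>i\<in>I. g i (\<alpha> i))"
      using insert.hyps by (intro prod.cong) auto
    then show "(\<Prod>i\<in>insert x I. g i ((\<alpha>(x:=a)) i)) = g x a * (\<Prod>i\<in>I. g i (\<alpha> i))"
      using insert.hyps by simp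
  qed
  also have "\<dots> = (\<Sum>a<n. g x a) * (\<Sum>\<alpha>\<in>GG I n. \<Prod>i\<in>I. g i (\<alpha> i))"
    by (simp add: sum.cartesian_product[symmetric] sum_product sum.swap[of _ "GG I n"])
  also have "\<dots> = (\<Prod>i\<in>insert x I. \<Sum>a<n. g i a)"
    using insert by simp
  finally show ?case .
qed

lemma root_geom:
  fixes \<zeta> :: complex
  assumes n: "1 \<le> n" and root: "\<zeta> ^ n = 1" and prim: "\<forall>j. 0 < j \<and> j < n \<longrightarrow> \<zeta> ^ j \<noteq> 1"
  shows "(\<Sum>a<n. \<zeta> ^ (a * d)) = (if n dvd d then of_nat n else 0)"
proof (cases "n dvd d")
  case True
  then obtain q where d: "d = n * q" by auto
  have "\<zeta> ^ (a * d) = 1" for a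
  proof -
    have "\<zeta> ^ (a * d) = (\<zeta> ^ n) ^ (a * q)" unfolding power_mult[symmetric] using d by (simp add: ac_simps)
    then show ?thesis using root by simp
  qed
  then show ?thesis using True by simp
next
  case False
  have "\<zeta> ^ d = \<zeta> ^ (d mod n)"
  proof -
    have "\<zeta> ^ d = \<zeta> ^ (n * (d div n) + d mod n)" by simp
    also have "\<dots> = (\<zeta> ^ n) ^ (d div n) * \<zeta> ^ (d mod n)" by (simp only: power_add power_mult)
    finally show ?thesis using root by simp
  qed
  moreover have "0 < d mod n" "d mod n < n" using False n by (auto simp: mod_greater_zero_iff_not_dvd)
  ultimately have ne: "\<zeta> ^ d \<noteq> 1" using prim by auto
  have "(\<Sum>a<n. \<zeta> ^ (a * d)) = (\<Sum>a<n. (\<zeta> ^ d) ^ a)"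
    by (intro sum.cong refl) (simp only: mult.commute[of _ d] power_mult)
  also have "\<dots> = ((\<zeta> ^ d) ^ n - 1) / (\<zeta> ^ d - 1)" using geometric_sum[OF ne] by simp
  also have "(\<zeta> ^ d) ^ n = 1"
  proof -
    have "(\<zeta> ^ d) ^ n = (\<zeta> ^ n) ^ d" by (simp only: power_mult[symmetric] mult.commute)
    then show ?thesis using root by simp
  qed
  finally show ?thesis using False by simp
qed

lemma orth:
  fixes \<zeta> :: complex
  assumes n: "1 \<le> n" and root: "\<zeta> ^ n = 1" and prim: "\<forall>j. 0 < j \<and> j < n \<longrightarrow> \<zeta> ^ j \<noteq> 1"
  shows "(\<Sum>\<alpha>\<in>GG {1..k} n. \<Prod>i\<in>{1..k}. \<zeta> ^ (\<alpha> i * d i)) =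
         (if \<forall>i\<in>{1..k}. n dvd d i then of_nat n ^ k else 0)"
proof -
  have "(\<Sum>\<alpha>\<in>GG {1..k} n. \<Prod>i\<in>{1..k}. \<zeta> ^ (\<alpha> i * d i)) = (\<Prod>i\<in>{1..k}. \<Sum>a<n. \<zeta> ^ (a * d i))"
    by (rule GG_prod_sum) simp
  also have "\<dots> = (\<Prod>i\<in>{1..k}. if n dvd d i then of_nat n else 0)"
    using root_geom[OF assms] by simp
  also have "\<dots> = (if \<forall>i\<in>{1..k}. n dvd d i then of_nat n ^ k else 0)"
    by (auto simp: prod_zero_iff)
  finally show ?thesis .
qed

lemma downset_eq:
  assumes S: "S \<subseteq> {1..(k::nat)}" and dc: "\<And>p q. p \<in> S \<Longrightarrow> 1 \<le> q \<Longrightarrow> q \<le> p \<Longrightarrow> q \<in> S"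
  shows "S = {1..card S}"
proof (cases "S = {}")
  case True then show ?thesis by simp
next
  case False
  have fin: "finite S" using S finite_subset by blast
  define m where "m = Max S"
  have mS: "m \<in> S" using fin False by (simp add: m_def)
  have "S = {1..m}"
  proof
    show "S \<subseteq> {1..m}" using S fin m_def by auto
    show "{1..m} \<subseteq> S" using dc mS by auto
  qed
  then show ?thesis by simp
qed

lemma Akn_props:
  assumes "lam \<in> Akn k n"
  shows "\<And>i. i \<in> {1..k} \<Longrightarrow> 0 < lam i \<and> lam i \<le> n"
    and "\<And>i j. 1 \<le> i \<Longrightarrow> i \<le> j \<Longrightarrow> j \<le> k \<Longrightarrow> lam j \<le> lam i"
    and "\<And>i. i \<notin> {1..k} \<Longrightarrow> lam i = 0"
  using assms unfolding Akn_def by auto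

lemma sorted_thresh:
  assumes lam: "lam \<in> Akn k n" and p: "p \<in> {1..k}"
  shows "v \<le> lam p \<longleftrightarrow> p \<le> card {q\<in>{1..k}. v \<le> lam q}"
proof -
  let ?S = "{q\<in>{1..k}. v \<le> lam q}"
  have "?S = {1..card ?S}"
    by (rule downset_eq[where k=k]) (use Akn_props(2)[OF lam] in \<open>auto intro: order_trans\<close>)
  then have "p \<in> ?S \<longleftrightarrow> p \<in> {1..card ?S}" by simp
  then show ?thesis using p by auto
qed

lemma card_perm_pred:
  assumes w: "w permutes {1..(k::nat)}"
  shows "card {j\<in>{1..k}. P (w j)} = card {q\<in>{1..k}. P q}"
proof -
  have "w ` {j\<in>{1..k}. P (w j)} = {q\<in>{1..k}. P q}"
  proof
    show "w ` {j\<in>{1..k}. P (w j)} \<subseteq> {q\<in>{1..k}. P q}"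
      using permutes_in_image[OF w] by auto
    show "{q\<in>{1..k}. P q} \<subseteq> w ` {j\<in>{1..k}. P (w j)}"
    proof
      fix q assume q: "q \<in> {q\<in>{1..k}. P q}"
      have "w (Hilbert_Choice.inv w q) = q" using permutes_inverses(1)[OF w] by simp
      moreover have "Hilbert_Choice.inv w q \<in> {1..k}" using q permutes_in_image[OF permutes_inv[OF w]] by auto
      ultimately show "q \<in> w ` {j\<in>{1..k}. P (w j)}" using q by (metis (mono_tags, lifting) image_eqI mem_Collect_eq)
    qed
  qed
  moreover have "inj_on w {j\<in>{1..k}. P (w j)}" using permutes_inj_on[OF w] by blast
  ultimately show ?thesis by (metis card_image)
qed

lemma card_ge_mult:
  assumes rho: "rho \<in> Akn k n" and v: "1 \<le> v"
  shows "card {q\<in>{1..k}. v \<le> rho q} = (\<Sum>u\<in>{v..n}. mult_of k rho u)"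
proof -
  have "{q\<in>{1..k}. v \<le> rho q} = (\<Union>u\<in>{v..n}. {q\<in>{1..k}. rho q = u})"
    using Akn_props(1)[OF rho] by auto
  moreover have "card (\<Union>u\<in>{v..n}. {q\<in>{1..k}. rho q = u}) = (\<Sum>u\<in>{v..n}. card {q\<in>{1..k}. rho q = u})"
    by (rule card_UN_disjoint) auto
  ultimately show ?thesis by (simp add: mult_of_def)
qed

lemma Akn_eq_mult:
  assumes rho: "rho \<in> Akn k n" and nu: "nu \<in> Akn k n"
    and m: "\<forall>i\<in>{1..n}. mult_of k rho i = mult_of k nu i"
  shows "rho = nu"
proof
  fix p
  show "rho p = nu p"
  proof (cases "p \<in> {1..k}")
    case False then show ?thesis using Akn_props(3)[OF rho] Akn_props(3)[OF nu] by simp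
  next
    case True
    have cg: "card {q\<in>{1..k}. v \<le> rho q} = card {q\<in>{1..k}. v \<le> nu q}" for v
    proof (cases "v = 0")
      case True then show ?thesis by simp
    next
      case False
      then show ?thesis using card_ge_mult[OF rho, of v] card_ge_mult[OF nu, of v] m by simp
    qed
    have "v \<le> rho p \<longleftrightarrow> v \<le> nu p" for v
      using sorted_thresh[OF rho True, of v] sorted_thresh[OF nu True, of v] cg[of v] by simp
    then show ?thesis by (meson le_antisym order_refl)
  qed
qed

lemma mult_perm:
  assumes w: "w \<in> Sk k"
  shows "mult_of k (rho \<circ> w) i = mult_of k rho i"
  using card_perm_pred[of w k "\<lambda>q. rho q = i"] w by (simp add: mult_of_def Sk_def)

definition Rset :: "nat \<Rightarrow> (nat \<Rightarrow> nat) \<Rightarrow> (nat \<Rightarrow> nat) set" where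
  "Rset k lam = {lam \<circ> w | w. w \<in> Sk k}"

lemma Rset_finite: "finite (Rset k lam)"
proof -
  have "Rset k lam = (\<lambda>w. lam \<circ> w) ` Sk k" by (auto simp: Rset_def)
  moreover have "finite (Sk k)" unfolding Sk_def by (rule finite_permutations) simp
  ultimately show ?thesis by simp
qed

lemma Rset_Akn_eq:
  assumes rho: "rho \<in> Akn k n" and nu: "nu \<in> Akn k n" and r: "nu \<in> Rset k rho"
  shows "nu = rho"
proof -
  obtain w where w: "w \<in> Sk k" "nu = rho \<circ> w" using r by (auto simp: Rset_def)
  show ?thesis using Akn_eq_mult[OF nu rho] mult_perm[OF w(1)] w(2) by simp
qed

lemma Rset_vals:
  assumes rho: "rho \<in> Akn k n" and b: "\<beta> \<in> Rset k rho"
  shows "\<And>i. i \<in> {1..k} \<Longrightarrow> 0 < \<beta> i \<and> \<beta> i \<le> n" and "\<And>i. i \<notin> {1..k} \<Longrightarrow> \<beta> i = 0"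
proof -
  obtain w where w: "w permutes {1..k}" "\<beta> = rho \<circ> w" using b by (auto simp: Rset_def Sk_def)
  show "\<And>i. i \<in> {1..k} \<Longrightarrow> 0 < \<beta> i \<and> \<beta> i \<le> n"
    using w Akn_props(1)[OF rho] permutes_in_image[OF w(1)] by auto
  show "\<And>i. i \<notin> {1..k} \<Longrightarrow> \<beta> i = 0"
    using w Akn_props(3)[OF rho] permutes_not_in[OF w(1)] by auto
qed

definition Dset :: "nat \<Rightarrow> (nat \<Rightarrow> nat) \<Rightarrow> (nat \<times> nat) set" where
  "Dset k \<beta> = {(i,j). 1 \<le> i \<and> i < j \<and> j \<le> k \<and> \<beta> i < \<beta> j}"

definition Tset :: "nat \<Rightarrow> (nat \<Rightarrow> nat) \<Rightarrow> (nat \<Rightarrow> nat) \<Rightarrow> (nat \<times> nat) set" where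
  "Tset k \<beta> v = {(i,j). 1 \<le> i \<and> i < j \<and> j \<le> k \<and> \<beta> i = \<beta> j \<and> v j < v i}"

definition rk :: "nat \<Rightarrow> (nat \<Rightarrow> nat) \<Rightarrow> nat \<Rightarrow> nat" where
  "rk k \<beta> i = card {j\<in>{1..k}. \<beta> i < \<beta> j \<or> (\<beta> j = \<beta> i \<and> j \<le> i)}"

lemma key_order:
  assumes lam: "lam \<in> Akn k n" and v: "v permutes {1..k}" and ij: "i \<in> {1..k}" "j \<in> {1..k}"
    and ne: "lam (v i) \<noteq> lam (v j)"
  shows "v j < v i \<longleftrightarrow> lam (v i) < lam (v j)"
proof -
  have vi: "v i \<in> {1..k}" "v j \<in> {1..k}" using ij permutes_in_image[OF v] by auto
  show ?thesis
  proof
    assume "v j < v i"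
    then have "lam (v i) \<le> lam (v j)" using Akn_props(2)[OF lam, of "v j" "v i"] vi by auto
    then show "lam (v i) < lam (v j)" using ne by simp
  next
    assume a: "lam (v i) < lam (v j)"
    show "v j < v i"
    proof (rule ccontr)
      assume "\<not> v j < v i"
      then have "lam (v j) \<le> lam (v i)" using Akn_props(2)[OF lam, of "v i" "v j"] vi by auto
      then show False using a by simp
    qed
  qed
qed

lemma len_split:
  assumes lam: "lam \<in> Akn k n" and v: "v permutes {1..k}"
  shows "perm_length k v = card (Dset k (lam \<circ> v)) + card (Tset k (lam \<circ> v) v)"
proof -
  have fin: "finite ({1..k} \<times> {1..k})" by simp
  have "{(i, j). 1 \<le> i \<and> i < j \<and> j \<le> k \<and> v j < v i} = Dset k (lam \<circ> v) \<union> Tset k (lam \<circ> v) v"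
  proof -
    have "(1 \<le> i \<and> i < j \<and> j \<le> k \<and> v j < v i) \<longleftrightarrow> (i,j) \<in> Dset k (lam \<circ> v) \<union> Tset k (lam \<circ> v) v" for i j
    proof (cases "1 \<le> i \<and> i < j \<and> j \<le> k")
      case True
      then have ij: "i \<in> {1..k}" "j \<in> {1..k}" by auto
      show ?thesis
      proof (cases "lam (v i) = lam (v j)")
        case True then show ?thesis by (auto simp: Dset_def Tset_def)
      next
        case False
        then show ?thesis using key_order[OF lam v ij False] True by (auto simp: Dset_def Tset_def)
      qed
    next
      case False then show ?thesis by (auto simp: Dset_def Tset_def)
    qed
    then show ?thesis by auto
  qed
  moreover have "Dset k (lam \<circ> v) \<inter> Tset k (lam \<circ> v) v = {}" by (auto simp: Dset_def Tset_def)
  moreover have "finite (Dset k (lam \<circ> v))" "finite (Tset k (lam \<circ> v) v)"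
    by (rule finite_subset[OF _ fin], auto simp: Dset_def Tset_def)+
  ultimately show ?thesis by (simp add: perm_length_def card_Un_disjoint)
qed

lemma Tset_finite: "finite (Tset k \<beta> v)"
  by (rule finite_subset[of _ "{1..k} \<times> {1..k}"]) (auto simp: Tset_def)

lemma rank_T0:
  assumes lam: "lam \<in> Akn k n" and v: "v permutes {1..k}" and T: "Tset k (lam \<circ> v) v = {}"
    and i: "i \<in> {1..k}"
  shows "v i = rk k (lam \<circ> v) i"
proof -
  have vi: "v i \<in> {1..k}" using i permutes_in_image[OF v] by auto
  have "v i = card {p\<in>{1..k}. p \<le> v i}"
  proof -
    have "{p\<in>{1..k}. p \<le> v i} = {1..v i}" using vi by auto
    then show ?thesis by simp
  qed
  also have "\<dots> = card {j\<in>{1..k}. v j \<le> v i}" using card_perm_pred[OF v, of "\<lambda>p. p \<le> v i"] by simp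
  also have "{j\<in>{1..k}. v j \<le> v i} = {j\<in>{1..k}. (lam \<circ> v) i < (lam \<circ> v) j \<or> ((lam \<circ> v) j = (lam \<circ> v) i \<and> j \<le> i)}"
  proof -
    have "v j \<le> v i \<longleftrightarrow> (lam (v i) < lam (v j) \<or> (lam (v j) = lam (v i) \<and> j \<le> i))" if jk: "j \<in> {1..k}" for j
    proof (cases "lam (v i) = lam (v j)")
      case True
      have "v j \<le> v i \<longleftrightarrow> j \<le> i"
      proof
        assume vj: "v j \<le> v i"
        show "j \<le> i"
        proof (rule ccontr)
          assume "\<not> j \<le> i"
          then have "i < j" by simp
          moreover have "v j \<noteq> v i" using \<open>i < j\<close> i jk permutes_inj_on[OF v] unfolding inj_on_def by auto
          ultimately have "(i,j) \<in> Tset k (lam \<circ> v) v" using True vj i jk unfolding Tset_def by auto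
          then show False using T by simp
        qed
      next
        assume "j \<le> i"
        show "v j \<le> v i"
        proof (cases "j = i")
          case True then show ?thesis by simp
        next
          case False
          then have "j < i" using \<open>j \<le> i\<close> by simp
          have "(j,i) \<notin> Tset k (lam \<circ> v) v" using T by simp
          then have "\<not> v i < v j" using \<open>j < i\<close> True jk i unfolding Tset_def by auto
          then show ?thesis by simp
        qed
      qed
      then show ?thesis using True by simp
    next
      case False
      have "v j \<noteq> v i" using False by auto
      then show ?thesis using key_order[OF lam v i jk] False by auto
    qed
    then show ?thesis by auto
  qed
  finally show ?thesis unfolding rk_def .
qed

lemma rk_less:
  assumes ij: "i \<in> {1..k}" "j \<in> {1..k}" and o: "\<beta> j < \<beta> i \<or> (\<beta> i = \<beta> j \<and> i < j)"
  shows "rk k \<beta> i < rk k \<beta> j"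
proof -
  let ?S = "\<lambda>i. {j'\<in>{1..k}. \<beta> i < \<beta> j' \<or> (\<beta> j' = \<beta> i \<and> j' \<le> i)}"
  have "?S i \<subseteq> ?S j" using o by auto
  moreover have "j \<in> ?S j" using ij by simp
  moreover have "j \<notin> ?S i" using o by auto
  ultimately have "?S i \<subset> ?S j" by blast
  moreover have "finite (?S j)" by simp
  ultimately have "card (?S i) < card (?S j)" by (simp add: psubset_card_mono)
  then show ?thesis unfolding rk_def .
qed

lemma rk_range:
  assumes i: "i \<in> {1..k}"
  shows "rk k \<beta> i \<in> {1..k}"
proof -
  let ?S = "{j\<in>{1..k}. \<beta> i < \<beta> j \<or> (\<beta> j = \<beta> i \<and> j \<le> i)}"
  have "i \<in> ?S" using i by simp
  moreover have "finite ?S" by simp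
  ultimately have "0 < card ?S" using card_gt_0_iff by blast
  then have "1 \<le> card ?S" by simp
  moreover have "card ?S \<le> card {1..k}" by (rule card_mono) auto
  ultimately show ?thesis unfolding rk_def by simp
qed

lemma v0_exists:
  assumes lam: "lam \<in> Akn k n" and b: "\<beta> \<in> Rset k lam"
  shows "\<exists>v. v permutes {1..k} \<and> lam \<circ> v = \<beta> \<and> Tset k \<beta> v = {}"
proof -
  obtain w where w: "w permutes {1..k}" and bw: "\<beta> = lam \<circ> w" using b by (auto simp: Rset_def Sk_def)
  define v where "v = (\<lambda>i. if i \<in> {1..k} then rk k \<beta> i else i)"
  have inj: "inj_on v {1..k}"
  proof (rule inj_onI)
    fix i j assume ij: "i \<in> {1..k}" "j \<in> {1..k}" and e: "v i = v j"
    show "i = j"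
    proof (rule ccontr)
      assume "i \<noteq> j"
      then have "(\<beta> j < \<beta> i \<or> (\<beta> i = \<beta> j \<and> i < j)) \<or> (\<beta> i < \<beta> j \<or> (\<beta> j = \<beta> i \<and> j < i))"
        by linarith
      then show False using rk_less[OF ij, where \<beta>=\<beta>] rk_less[OF ij(2,1), where \<beta>=\<beta>] e ij by (auto simp: v_def)
    qed
  qed
  have img: "v ` {1..k} \<subseteq> {1..k}" using rk_range by (auto simp: v_def)
  have "v ` {1..k} = {1..k}" by (rule endo_inj_surj[OF _ img inj]) simp
  then have bij: "bij_betw v {1..k} {1..k}" using inj by (simp add: bij_betw_def)
  have vp: "v permutes {1..k}"
    by (rule bij_imp_permutes[OF bij]) (auto simp: v_def)
  have T: "Tset k \<beta> v = {}"
  proof -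
    { fix i j assume "(i,j) \<in> Tset k \<beta> v"
      then have ij: "i \<in> {1..k}" "j \<in> {1..k}" "\<beta> i = \<beta> j" "i < j" "v j < v i" by (auto simp: Tset_def)
      then have "rk k \<beta> i < rk k \<beta> j" using rk_less[OF ij(1,2), where \<beta>=\<beta>] by simp
      then have False using ij by (auto simp: v_def) }
    then show ?thesis by auto
  qed
  have lv: "lam (v i) = \<beta> i" for i
  proof (cases "i \<in> {1..k}")
    case False
    have "v i = i" using False unfolding v_def by auto
    moreover have "w i = i" using permutes_not_in[OF w False] .
    ultimately show ?thesis using bw by simp
  next
    case True
    let ?b = "\<beta> i"
    let ?r = "rk k \<beta> i"
    have r: "?r \<in> {1..k}" using rk_range[OF True] .
    have A: "card {j\<in>{1..k}. Suc ?b \<le> \<beta> j} = card {q\<in>{1..k}. Suc ?b \<le> lam q}"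
      using card_perm_pred[OF w, of "\<lambda>x. Suc ?b \<le> lam x"] bw by simp
    have A': "card {j\<in>{1..k}. ?b \<le> \<beta> j} = card {q\<in>{1..k}. ?b \<le> lam q}"
      using card_perm_pred[OF w, of "\<lambda>x. ?b \<le> lam x"] bw by simp
    have "?r \<le> card {j\<in>{1..k}. ?b \<le> \<beta> j}"
      unfolding rk_def by (rule card_mono) auto
    then have ge: "?b \<le> lam ?r" using sorted_thresh[OF lam r, of ?b] A' by simp
    have "{j\<in>{1..k}. Suc ?b \<le> \<beta> j} \<subset> {j\<in>{1..k}. \<beta> i < \<beta> j \<or> (\<beta> j = \<beta> i \<and> j \<le> i)}"
      using True by auto
    then have "card {j\<in>{1..k}. Suc ?b \<le> \<beta> j} < ?r" unfolding rk_def
      by (rule psubset_card_mono[rotated]) simp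
    then have "\<not> Suc ?b \<le> lam ?r" using sorted_thresh[OF lam r, of "Suc ?b"] A by simp
    then show ?thesis using ge True by (simp add: v_def)
  qed
  show ?thesis using vp T lv by (intro exI[of _ v]) auto
qed

lemma coset:
  assumes w: "w permutes {1..k}" and v: "v permutes {1..k}" and e: "lam \<circ> v = lam \<circ> w"
  shows "v \<circ> Hilbert_Choice.inv w \<in> stab k lam \<and> v = (v \<circ> Hilbert_Choice.inv w) \<circ> w"
proof -
  have u: "v \<circ> Hilbert_Choice.inv w permutes {1..k}" by (rule permutes_compose[OF permutes_inv[OF w] v])
  have "lam \<circ> (v \<circ> Hilbert_Choice.inv w) = lam \<circ> w \<circ> Hilbert_Choice.inv w" using e by (simp add: o_assoc)
  also have "\<dots> = lam" using permutes_inv_o(1)[OF w] by (simp add: o_assoc[symmetric])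
  finally have "v \<circ> Hilbert_Choice.inv w \<in> stab k lam" using u by (simp add: stab_def Sk_def)
  moreover have "(v \<circ> Hilbert_Choice.inv w) \<circ> w = v" using permutes_inv_o(2)[OF w] by (simp add: o_assoc[symmetric])
  ultimately show ?thesis by simp
qed

lemma minreps_T0:
  assumes lam: "lam \<in> Akn k n" and wm: "w \<in> min_reps k lam"
  shows "Tset k (lam \<circ> w) w = {}"
proof -
  have w: "w permutes {1..k}" using wm by (simp add: min_reps_def Sk_def)
  have "lam \<circ> w \<in> Rset k lam" using w by (auto simp: Rset_def Sk_def)
  then obtain v where v: "v permutes {1..k}" "lam \<circ> v = lam \<circ> w" "Tset k (lam \<circ> w) v = {}"
    using v0_exists[OF lam] by blast
  from coset[OF w v(1,2)] obtain u where u: "u \<in> stab k lam" and vu: "v = u \<circ> w" by blast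
  have "perm_length k w \<le> perm_length k (u \<circ> w)" using wm u unfolding min_reps_def by blast
  then have "perm_length k w \<le> perm_length k v" using vu by simp
  then have "card (Tset k (lam \<circ> w) w) \<le> 0"
    using len_split[OF lam w] len_split[OF lam v(1)] v(2,3) by simp
  then show ?thesis using Tset_finite by simp
qed

lemma minreps_bij:
  assumes lam: "lam \<in> Akn k n"
  shows "bij_betw (\<lambda>w. lam \<circ> w) (min_reps k lam) (Rset k lam)"
proof (rule bij_betwI')
  fix w w' assume wm: "w \<in> min_reps k lam" and wm': "w' \<in> min_reps k lam"
  have w: "w permutes {1..k}" using wm by (simp add: min_reps_def Sk_def)
  have w': "w' permutes {1..k}" using wm' by (simp add: min_reps_def Sk_def)
  show "(lam \<circ> w = lam \<circ> w') = (w = w')"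
  proof
    assume e: "lam \<circ> w = lam \<circ> w'"
    show "w = w'"
    proof
      fix i show "w i = w' i"
      proof (cases "i \<in> {1..k}")
        case True
        have 1: "w i = rk k (lam \<circ> w) i" using rank_T0[OF lam w minreps_T0[OF lam wm] True] .
        have 2: "w' i = rk k (lam \<circ> w') i" using rank_T0[OF lam w' minreps_T0[OF lam wm'] True] .
        have 3: "rk k (lam \<circ> w) i = rk k (lam \<circ> w') i" using e by (simp only:)
        show ?thesis using 1 2 3 by (simp only:)
      next
        case False
        then show ?thesis using permutes_not_in[OF w False] permutes_not_in[OF w' False] by simp
      qed
    qed
  qed simp
next
  fix w assume "w \<in> min_reps k lam"
  then show "lam \<circ> w \<in> Rset k lam" by (auto simp: min_reps_def Rset_def)
next
  fix \<beta> assume b: "\<beta> \<in> Rset k lam"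
  obtain v where v: "v permutes {1..k}" "lam \<circ> v = \<beta>" "Tset k \<beta> v = {}"
    using v0_exists[OF lam b] by blast
  have "v \<in> min_reps k lam"
    unfolding min_reps_def
  proof (intro CollectI conjI ballI)
    show "v \<in> Sk k" using v by (simp add: Sk_def)
    fix u assume u: "u \<in> stab k lam"
    have up: "u permutes {1..k}" and lu: "lam \<circ> u = lam" using u by (auto simp: stab_def Sk_def)
    have uv: "u \<circ> v permutes {1..k}" by (rule permutes_compose[OF v(1) up])
    have "lam \<circ> (u \<circ> v) = \<beta>" using lu v(2) by (simp add: o_assoc)
    then show "perm_length k v \<le> perm_length k (u \<circ> v)"
      using len_split[OF lam v(1)] len_split[OF lam uv] v(2,3) by simp
  qed
  then show "\<exists>w\<in>min_reps k lam. \<beta> = lam \<circ> w" using v(2) by blast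
qed

lemma vsize_perm:
  assumes "w permutes {1..k}"
  shows "(\<Sum>i=1..k. (lam \<circ> w) i) = vsize k lam"
  using sum.permute[OF assms, of lam] by (simp add: vsize_def)

lemma cond_equiv:
  assumes n: "1 \<le> n" and nu: "nu \<in> Akn k n" and lam: "lam \<in> Akn k n" and mu: "mu \<in> Akn k n"
    and b: "\<beta> \<in> Rset k lam" and g: "\<gamma> \<in> Rset k mu"
  shows "(\<exists>\<alpha> :: nat \<Rightarrow> int.
         (\<forall>i\<in>{1..k}. int (\<beta> i) + int (\<gamma> i) = int (nu i) + int n * \<alpha> i) \<and>
         int n * (\<Sum>i=1..k. \<alpha> i) = int (vsize k lam) + int (vsize k mu) - int (vsize k nu))
       \<longleftrightarrow> (\<forall>i\<in>{1..k}. n dvd (\<beta> i + \<gamma> i + (n - nu i)))" (is "?L \<longleftrightarrow> ?R")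
proof
  assume ?L
  then obtain \<alpha> where a: "\<forall>i\<in>{1..k}. int (\<beta> i) + int (\<gamma> i) = int (nu i) + int n * \<alpha> i" by blast
  show "\<forall>i\<in>{1..k}. n dvd (\<beta> i + \<gamma> i + (n - nu i))"
  proof
    fix i assume i: "i \<in> {1..k}"
    have "nu i \<le> n" using Akn_props(1)[OF nu i] by simp
    then have "int (\<beta> i + \<gamma> i + (n - nu i)) = int n * (\<alpha> i + 1)"
      using a i by (simp add: algebra_simps of_nat_diff)
    then have "int n dvd int (\<beta> i + \<gamma> i + (n - nu i))" by simp
    then show "n dvd (\<beta> i + \<gamma> i + (n - nu i))" by (simp only: int_dvd_int_iff)
  qed
next
  assume d: "\<forall>i\<in>{1..k}. n dvd (\<beta> i + \<gamma> i + (n - nu i))"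
  define \<alpha> where "\<alpha> i = (int (\<beta> i) + int (\<gamma> i) - int (nu i)) div int n" for i
  have ai: "int (\<beta> i) + int (\<gamma> i) = int (nu i) + int n * \<alpha> i" if i: "i \<in> {1..k}" for i
  proof -
    have "nu i \<le> n" using Akn_props(1)[OF nu i] by simp
    have "int n dvd int (\<beta> i + \<gamma> i + (n - nu i))" using d i by (simp only: int_dvd_int_iff)
    then have "int n dvd (int (\<beta> i) + int (\<gamma> i) - int (nu i)) + int n"
      using \<open>nu i \<le> n\<close> by (simp add: of_nat_diff algebra_simps)
    then have "int n dvd (int (\<beta> i) + int (\<gamma> i) - int (nu i))" by (simp add: dvd_add_left_iff)
    then show ?thesis unfolding \<alpha>_def by (simp add: dvd_mult_div_cancel)
  qed
  obtain w where w: "w permutes {1..k}" "\<beta> = lam \<circ> w" using b by (auto simp: Rset_def Sk_def)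
  obtain w' where w': "w' permutes {1..k}" "\<gamma> = mu \<circ> w'" using g by (auto simp: Rset_def Sk_def)
  have "int n * (\<Sum>i=1..k. \<alpha> i) = (\<Sum>i=1..k. int (\<beta> i) + int (\<gamma> i) - int (nu i))"
    using ai by (simp add: sum_distrib_left)
  also have "\<dots> = int (\<Sum>i=1..k. \<beta> i) + int (\<Sum>i=1..k. \<gamma> i) - int (\<Sum>i=1..k. nu i)"
    by (simp add: sum.distrib sum_subtractf)
  also have "\<dots> = int (vsize k lam) + int (vsize k mu) - int (vsize k nu)"
    using vsize_perm[OF w(1), of lam] vsize_perm[OF w'(1), of mu] w(2) w'(2) by (simp add: vsize_def)
  finally have se: "int n * (\<Sum>i=1..k. \<alpha> i) = int (vsize k lam) + int (vsize k mu) - int (vsize k nu)" .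
  show ?L using ai se by blast
qed

lemma Ncoef_count:
  assumes n: "1 \<le> n" and nu: "nu \<in> Akn k n" and lam: "lam \<in> Akn k n" and mu: "mu \<in> Akn k n"
  shows "Ncoef k n nu lam mu = card {(\<beta>, \<gamma>) \<in> Rset k lam \<times> Rset k mu. \<forall>i\<in>{1..k}. n dvd (\<beta> i + \<gamma> i + (n - nu i))}"
proof -
  let ?Q = "\<lambda>\<beta> \<gamma>. (\<exists>\<alpha> :: nat \<Rightarrow> int.
         (\<forall>i\<in>{1..k}. int (\<beta> i) + int (\<gamma> i) = int (nu i) + int n * \<alpha> i) \<and>
         int n * (\<Sum>i=1..k. \<alpha> i) = int (vsize k lam) + int (vsize k mu) - int (vsize k nu))"
  let ?S = "{(w, w'). w \<in> min_reps k lam \<and> w' \<in> min_reps k mu \<and> ?Q (lam \<circ> w) (mu \<circ> w')}"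
  let ?f = "\<lambda>(w, w'). (lam \<circ> w, mu \<circ> w')"
  note B1 = minreps_bij[OF lam] and B2 = minreps_bij[OF mu]
  have "Ncoef k n nu lam mu = card ?S" unfolding Ncoef_def by (simp add: o_def)
  also have "\<dots> = card (?f ` ?S)"
  proof (rule card_image[symmetric], rule inj_onI)
    fix x y assume x: "x \<in> ?S" and y: "y \<in> ?S" and e: "?f x = ?f y"
    obtain w1 w1' where xx: "x = (w1, w1')" by (cases x)
    obtain w2 w2' where yy: "y = (w2, w2')" by (cases y)
    have m: "w1 \<in> min_reps k lam" "w2 \<in> min_reps k lam" "w1' \<in> min_reps k mu" "w2' \<in> min_reps k mu"
      using x y xx yy by auto
    have e1: "lam \<circ> w1 = lam \<circ> w2" and e2: "mu \<circ> w1' = mu \<circ> w2'" using e xx yy by auto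
    have "w1 = w2" by (rule inj_onD[OF bij_betw_imp_inj_on[OF B1] _ m(1,2)]) (simp add: e1)
    moreover have "w1' = w2'" by (rule inj_onD[OF bij_betw_imp_inj_on[OF B2] _ m(3,4)]) (simp add: e2)
    ultimately show "x = y" using xx yy by simp
  qed
  also have "?f ` ?S = {(\<beta>, \<gamma>) \<in> Rset k lam \<times> Rset k mu. ?Q \<beta> \<gamma>}"
  proof
    show "?f ` ?S \<subseteq> {(\<beta>, \<gamma>) \<in> Rset k lam \<times> Rset k mu. ?Q \<beta> \<gamma>}"
    proof
      fix p assume "p \<in> ?f ` ?S"
      then obtain w w' where ww: "(w, w') \<in> ?S" "p = (lam \<circ> w, mu \<circ> w')" by auto
      then have m: "w \<in> min_reps k lam" "w' \<in> min_reps k mu" "?Q (lam \<circ> w) (mu \<circ> w')" by auto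
      have "lam \<circ> w \<in> Rset k lam" using m(1) by (auto simp: min_reps_def Rset_def)
      moreover have "mu \<circ> w' \<in> Rset k mu" using m(2) by (auto simp: min_reps_def Rset_def)
      ultimately show "p \<in> {(\<beta>, \<gamma>) \<in> Rset k lam \<times> Rset k mu. ?Q \<beta> \<gamma>}" using m(3) ww(2) by simp
    qed
  next
    show "{(\<beta>, \<gamma>) \<in> Rset k lam \<times> Rset k mu. ?Q \<beta> \<gamma>} \<subseteq> ?f ` ?S"
    proof
      fix p assume p: "p \<in> {(\<beta>, \<gamma>) \<in> Rset k lam \<times> Rset k mu. ?Q \<beta> \<gamma>}"
      obtain \<beta> \<gamma> where pp: "p = (\<beta>, \<gamma>)" by (cases p)
      have b: "\<beta> \<in> Rset k lam" and g: "\<gamma> \<in> Rset k mu" and q: "?Q \<beta> \<gamma>" using p pp by auto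
      obtain w where "w \<in> min_reps k lam" "\<beta> = lam \<circ> w"
        using b bij_betw_imp_surj_on[OF B1] by (metis (no_types, lifting) imageE)
      moreover obtain w' where "w' \<in> min_reps k mu" "\<gamma> = mu \<circ> w'"
        using g bij_betw_imp_surj_on[OF B2] by (metis (no_types, lifting) imageE)
      ultimately show "p \<in> ?f ` ?S" using q pp by (intro image_eqI[where x="(w,w')"]) auto
    qed
  qed
  also have "{(\<beta>, \<gamma>) \<in> Rset k lam \<times> Rset k mu. ?Q \<beta> \<gamma>}
      = {(\<beta>, \<gamma>) \<in> Rset k lam \<times> Rset k mu. \<forall>i\<in>{1..k}. n dvd (\<beta> i + \<gamma> i + (n - nu i))}"
  proof -
    have "\<And>\<beta> \<gamma>. \<beta> \<in> Rset k lam \<Longrightarrow> \<gamma> \<in> Rset k mu \<Longrightarrow> ?Q \<beta> \<gamma> = (\<forall>i\<in>{1..k}. n dvd (\<beta> i + \<gamma> i + (n - nu i)))"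
      by (rule cond_equiv[OF n nu lam mu])
    then show ?thesis by auto
  qed
  finally show ?thesis .
qed

lemma monsym_expand:
  "monsym k lam (\<lambda>i. \<zeta> ^ \<alpha> i) = (\<Sum>\<beta>\<in>Rset k lam. \<Prod>i\<in>{1..k}. \<zeta> ^ (\<alpha> i * \<beta> i))"
  unfolding monsym_def Rset_def by (simp add: power_mult)

lemma sum_if_card:
  assumes "finite A"
  shows "(\<Sum>x\<in>A. if P x then c else 0) = of_nat (card {x\<in>A. P x}) * (c :: complex)"
proof -
  have "(\<Sum>x\<in>A. if P x then c else 0) = (\<Sum>x\<in>{x\<in>A. P x}. c)"
    using sum.inter_filter[OF assms, of "\<lambda>_. c" P] by simp
  then show ?thesis by simp
qed

lemma lhs_sum:
  fixes \<zeta> :: complex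
  assumes n: "1 \<le> n" and root: "\<zeta> ^ n = 1" and prim: "\<forall>j. 0 < j \<and> j < n \<longrightarrow> \<zeta> ^ j \<noteq> 1"
    and lam: "lam \<in> Akn k n" and mu: "mu \<in> Akn k n" and nu: "nu \<in> Akn k n"
  shows "(\<Sum>\<alpha>\<in>GG {1..k} n. monsym k lam (\<lambda>i. \<zeta> ^ \<alpha> i) * monsym k mu (\<lambda>i. \<zeta> ^ \<alpha> i) *
            (\<Prod>i\<in>{1..k}. \<zeta> ^ (\<alpha> i * (n - nu i))))
         = of_nat (Ncoef k n nu lam mu) * of_nat n ^ k"
proof -
  let ?P = "\<lambda>\<beta> \<gamma>. \<forall>i\<in>{1..k}. n dvd (\<beta> i + \<gamma> i + (n - nu i))"
  have e: "monsym k lam (\<lambda>i. \<zeta> ^ \<alpha> i) * monsym k mu (\<lambda>i. \<zeta> ^ \<alpha> i) * (\<Prod>i\<in>{1..k}. \<zeta> ^ (\<alpha> i * (n - nu i)))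
      = (\<Sum>\<beta>\<in>Rset k lam. \<Sum>\<gamma>\<in>Rset k mu. \<Prod>i\<in>{1..k}. \<zeta> ^ (\<alpha> i * (\<beta> i + \<gamma> i + (n - nu i))))" for \<alpha>
  proof -
    have "monsym k lam (\<lambda>i. \<zeta> ^ \<alpha> i) * monsym k mu (\<lambda>i. \<zeta> ^ \<alpha> i) * (\<Prod>i\<in>{1..k}. \<zeta> ^ (\<alpha> i * (n - nu i)))
      = (\<Sum>\<beta>\<in>Rset k lam. \<Sum>\<gamma>\<in>Rset k mu. (\<Prod>i\<in>{1..k}. \<zeta> ^ (\<alpha> i * \<beta> i)) * (\<Prod>i\<in>{1..k}. \<zeta> ^ (\<alpha> i * \<gamma> i))
            * (\<Prod>i\<in>{1..k}. \<zeta> ^ (\<alpha> i * (n - nu i))))"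
      unfolding monsym_expand sum_product by (simp add: sum_distrib_right)
    also have "\<dots> = (\<Sum>\<beta>\<in>Rset k lam. \<Sum>\<gamma>\<in>Rset k mu. \<Prod>i\<in>{1..k}. \<zeta> ^ (\<alpha> i * (\<beta> i + \<gamma> i + (n - nu i))))"
      by (simp add: prod.distrib[symmetric] power_add[symmetric] distrib_left)
    finally show ?thesis .
  qed
  have "(\<Sum>\<alpha>\<in>GG {1..k} n. monsym k lam (\<lambda>i. \<zeta> ^ \<alpha> i) * monsym k mu (\<lambda>i. \<zeta> ^ \<alpha> i) *
            (\<Prod>i\<in>{1..k}. \<zeta> ^ (\<alpha> i * (n - nu i))))
      = (\<Sum>\<alpha>\<in>GG {1..k} n. \<Sum>\<beta>\<in>Rset k lam. \<Sum>\<gamma>\<in>Rset k mu. \<Prod>i\<in>{1..k}. \<zeta> ^ (\<alpha> i * (\<beta> i + \<gamma> i + (n - nu i))))"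
    using e by simp
  also have "\<dots> = (\<Sum>\<beta>\<in>Rset k lam. \<Sum>\<alpha>\<in>GG {1..k} n. \<Sum>\<gamma>\<in>Rset k mu. \<Prod>i\<in>{1..k}. \<zeta> ^ (\<alpha> i * (\<beta> i + \<gamma> i + (n - nu i))))"
    by (rule sum.swap)
  also have "\<dots> = (\<Sum>\<beta>\<in>Rset k lam. \<Sum>\<gamma>\<in>Rset k mu. \<Sum>\<alpha>\<in>GG {1..k} n. \<Prod>i\<in>{1..k}. \<zeta> ^ (\<alpha> i * (\<beta> i + \<gamma> i + (n - nu i))))"
    by (rule sum.cong[OF refl], rule sum.swap)
  also have "\<dots> = (\<Sum>\<beta>\<in>Rset k lam. \<Sum>\<gamma>\<in>Rset k mu. if ?P \<beta> \<gamma> then of_nat n ^ k else 0)"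
    using orth[OF n root prim] by simp
  also have "\<dots> = (\<Sum>p\<in>Rset k lam \<times> Rset k mu. if ?P (fst p) (snd p) then of_nat n ^ k else 0)"
    by (simp add: sum.cartesian_product case_prod_unfold)
  also have "\<dots> = of_nat (card {p\<in>Rset k lam \<times> Rset k mu. ?P (fst p) (snd p)}) * of_nat n ^ k"
    by (rule sum_if_card) (simp add: Rset_finite)
  also have "{p\<in>Rset k lam \<times> Rset k mu. ?P (fst p) (snd p)} = {(\<beta>, \<gamma>) \<in> Rset k lam \<times> Rset k mu. ?P \<beta> \<gamma>}"
    by auto
  finally show ?thesis using Ncoef_count[OF n nu lam mu] by simp
qed

lemma rhs_sum:
  fixes \<zeta> :: complex
  assumes n: "1 \<le> n" and root: "\<zeta> ^ n = 1" and prim: "\<forall>j. 0 < j \<and> j < n \<longrightarrow> \<zeta> ^ j \<noteq> 1"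
    and rho: "rho \<in> Akn k n" and nu: "nu \<in> Akn k n"
  shows "(\<Sum>\<alpha>\<in>GG {1..k} n. monsym k rho (\<lambda>i. \<zeta> ^ \<alpha> i) * (\<Prod>i\<in>{1..k}. \<zeta> ^ (\<alpha> i * (n - nu i))))
         = (if rho = nu then of_nat n ^ k else 0)"
proof -
  let ?P = "\<lambda>\<beta>. \<forall>i\<in>{1..k}. n dvd (\<beta> i + (n - nu i))"
  have "(\<Sum>\<alpha>\<in>GG {1..k} n. monsym k rho (\<lambda>i. \<zeta> ^ \<alpha> i) * (\<Prod>i\<in>{1..k}. \<zeta> ^ (\<alpha> i * (n - nu i))))
      = (\<Sum>\<alpha>\<in>GG {1..k} n. \<Sum>\<beta>\<in>Rset k rho. \<Prod>i\<in>{1..k}. \<zeta> ^ (\<alpha> i * (\<beta> i + (n - nu i))))"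
    unfolding monsym_expand
    by (simp add: sum_distrib_right prod.distrib[symmetric] power_add[symmetric] distrib_left)
  also have "\<dots> = (\<Sum>\<beta>\<in>Rset k rho. \<Sum>\<alpha>\<in>GG {1..k} n. \<Prod>i\<in>{1..k}. \<zeta> ^ (\<alpha> i * (\<beta> i + (n - nu i))))"
    by (rule sum.swap)
  also have "\<dots> = (\<Sum>\<beta>\<in>Rset k rho. if ?P \<beta> then of_nat n ^ k else 0)"
    using orth[OF n root prim] by simp
  also have "\<dots> = of_nat (card {\<beta>\<in>Rset k rho. ?P \<beta>}) * of_nat n ^ k"
    by (rule sum_if_card) (simp add: Rset_finite)
  also have "{\<beta>\<in>Rset k rho. ?P \<beta>} = (if rho = nu then {nu} else {})"
  proof -
    have "?P \<beta> \<longleftrightarrow> \<beta> = nu" if b: "\<beta> \<in> Rset k rho" for \<beta>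
    proof
      assume P: "?P \<beta>"
      show "\<beta> = nu"
      proof
        fix i show "\<beta> i = nu i"
        proof (cases "i \<in> {1..k}")
          case False
          then show ?thesis using Rset_vals(2)[OF rho b False] Akn_props(3)[OF nu False] by simp
        next
          case True
          have bi: "0 < \<beta> i" "\<beta> i \<le> n" using Rset_vals(1)[OF rho b True] by auto
          have ni: "0 < nu i" "nu i \<le> n" using Akn_props(1)[OF nu True] by auto
          obtain q where q: "\<beta> i + (n - nu i) = n * q" using P True by blast
          have "0 < \<beta> i + (n - nu i)" using bi by simp
          then have "0 < n * q" unfolding q .
          moreover have "\<beta> i + (n - nu i) < n * 2" using bi ni by simp
          then have "n * q < n * 2" unfolding q .
          ultimately have "0 < q \<and> q < 2" by simp
          then have "q = 1" by linarith
          then show ?thesis using q ni bi by simp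
        qed
      qed
    next
      assume "\<beta> = nu"
      then show "?P \<beta>" using Akn_props(1)[OF nu] by auto
    qed
    moreover have "nu \<in> Rset k rho \<longleftrightarrow> rho = nu"
    proof
      assume "nu \<in> Rset k rho" then show "rho = nu" using Rset_Akn_eq[OF rho nu] by simp
    next
      assume "rho = nu"
      moreover have "id \<in> Sk k" by (simp add: Sk_def permutes_id)
      moreover have "nu = rho \<circ> id" using \<open>rho = nu\<close> by simp
      ultimately show "nu \<in> Rset k rho" unfolding Rset_def by blast
    qed
    ultimately show ?thesis by auto
  qed
  finally show ?thesis by simp
qed

lemma shape_exists:
  assumes T: "T \<in> multipartitions n k"
  shows "\<exists>rho\<in>Akn k n. has_shape k n T rho"
proof -
  define c where "c v = sum_list (T v)" for v
  define S where "S v = (\<Sum>u\<in>{v..n}. c u)" for v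
  have S1: "S 1 = k" using T by (simp add: S_def c_def multipartitions_def)
  have Smono: "S v \<le> S v'" if "v' \<le> v" for v v'
    unfolding S_def by (rule sum_mono2) (use that in auto)
  have Sstep: "S v = c v + S (Suc v)" if "v \<le> n" for v
    unfolding S_def using that by (simp add: sum.atLeast_Suc_atMost)
  have Sn1: "S (Suc n) = 0" by (simp add: S_def)
  define rho where "rho p = (if p \<in> {1..k} then card {v\<in>{1..n}. p \<le> S v} else 0)" for p
  have thr: "v \<le> rho p \<longleftrightarrow> p \<le> S v" if p: "p \<in> {1..k}" and v: "v \<in> {1..n}" for p v
  proof -
    let ?A = "{v\<in>{1..n}. p \<le> S v}"
    have "?A = {1..card ?A}"
      by (rule downset_eq[where k=n]) (use Smono in \<open>auto intro: order_trans\<close>)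
    then have "v \<in> ?A \<longleftrightarrow> v \<in> {1..card ?A}" by simp
    then show ?thesis using p v by (auto simp: rho_def)
  qed
  have rho_le: "rho p \<le> n" for p
  proof -
    have "card {v\<in>{1..n}. p \<le> S v} \<le> card {1..n}" by (rule card_mono) auto
    then show ?thesis by (simp add: rho_def)
  qed
  have thr': "v \<le> rho p \<longleftrightarrow> p \<le> S v" if p: "p \<in> {1..k}" and v: "v \<in> {1..Suc n}" for p v
  proof (cases "v = Suc n")
    case True then show ?thesis using rho_le[of p] Sn1 p by auto
  next
    case False then show ?thesis using thr[OF p] v by auto
  qed
  have A: "rho \<in> Akn k n"
    unfolding Akn_def
  proof (intro CollectI conjI allI ballI impI)
    fix i assume i: "i \<in> {1..k}"
    have "n \<ge> 1" proof (rule ccontr)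
      assume "\<not> 1 \<le> n" then have "S 1 = 0" by (simp add: S_def)
      then show False using S1 i by simp
    qed
    then have "1 \<le> rho i" using thr[OF i, of 1] S1 i by simp
    then show "0 < rho i" by simp
    show "rho i \<le> n" by (rule rho_le)
  next
    fix i j assume ij: "1 \<le> i" "i \<le> j" "j \<le> k"
    have "{v\<in>{1..n}. j \<le> S v} \<subseteq> {v\<in>{1..n}. i \<le> S v}" using ij by auto
    then have "card {v\<in>{1..n}. j \<le> S v} \<le> card {v\<in>{1..n}. i \<le> S v}" by (rule card_mono[rotated]) simp
    then show "rho j \<le> rho i" using ij by (simp add: rho_def)
  next
    fix i assume "i \<notin> {1..k}" then show "rho i = 0" unfolding rho_def by auto
  qed
  have "has_shape k n T rho"
    unfolding has_shape_def
  proof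
    fix v assume v: "v \<in> {1..n}"
    have "{p\<in>{1..k}. rho p = v} = {p\<in>{1..k}. p \<le> S v \<and> \<not> p \<le> S (Suc v)}"
    proof -
      have "rho p = v \<longleftrightarrow> (v \<le> rho p \<and> \<not> Suc v \<le> rho p)" for p by auto
      then show ?thesis using thr'[of _ v] thr'[of _ "Suc v"] v by auto
    qed
    also have "\<dots> = {Suc (S (Suc v))..S v}"
      using Smono[of 1 v] S1 v by auto
    finally have "mult_of k rho v = S v - S (Suc v)" by (simp add: mult_of_def)
    also have "\<dots> = c v" using Sstep[of v] v by simp
    finally show "sum_list (T v) = mult_of k rho v" by (simp add: c_def)
  qed
  then show ?thesis using A by blast
qed

lemma length_le_sum_list: "(\<forall>x\<in>set xs. 0 < (x::nat)) \<Longrightarrow> length xs \<le> sum_list xs"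
  by (induction xs) auto

lemma mp_finite: "finite (multipartitions n k)"
proof -
  define Lk where "Lk = {xs :: nat list. set xs \<subseteq> {0..k} \<and> length xs \<le> k}"
  have fL: "finite Lk" unfolding Lk_def by (rule finite_lists_length_le) simp
  have "multipartitions n k \<subseteq> (\<lambda>f i. if i \<in> {1..n} then f i else []) ` (PiE {1..n} (\<lambda>_. Lk))"
  proof
    fix P assume P: "P \<in> multipartitions n k"
    have Pi: "P i \<in> Lk" if i: "i \<in> {1..n}" for i
    proof -
      have part: "is_partition (P i)" using P i by (simp add: multipartitions_def)
      have "sum_list (P i) \<le> (\<Sum>j=1..n. sum_list (P j))"
        by (rule member_le_sum) (use i in auto)
      then have s: "sum_list (P i) \<le> k" using P by (simp add: multipartitions_def)
      have "length (P i) \<le> k" using length_le_sum_list[of "P i"] part s by (auto simp: is_partition_def)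
      moreover have "set (P i) \<subseteq> {0..k}" using s member_le_sum_list[of _ "P i"] by fastforce
      ultimately show ?thesis by (simp add: Lk_def)
    qed
    have "P = (\<lambda>i. if i \<in> {1..n} then restrict P {1..n} i else [])"
      using P by (auto simp: multipartitions_def)
    moreover have "restrict P {1..n} \<in> PiE {1..n} (\<lambda>_. Lk)" using Pi by auto
    ultimately show "P \<in> (\<lambda>f i. if i \<in> {1..n} then f i else []) ` (PiE {1..n} (\<lambda>_. Lk))" by blast
  qed
  moreover have "finite (PiE {1..n} (\<lambda>_. Lk))" using fL by (simp add: finite_PiE)
  ultimately show ?thesis using finite_subset by blast
qed

lemma fmulti_nonzero:
  assumes irr: "irreducible_rep n k (L P)"
    and tr: "mat_trace (snd (L P) (ypow (\<lambda>_. 0))) = of_nat (fmulti n P) * m"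
  shows "fmulti n P \<noteq> 0"
proof
  assume z: "fmulti n P = 0"
  obtain d r where Ld: "L P = (d, r)" by (cases "L P")
  have "r gone = 1\<^sub>m d" "0 < d" using irr Ld by (auto simp: irreducible_rep_def is_rep_def)
  moreover have "ypow (\<lambda>_. 0) = gone" by (simp add: ypow_def gone_def)
  ultimately have "mat_trace (1\<^sub>m d) = 0" using tr z Ld by simp
  moreover have "mat_trace (1\<^sub>m d) = of_nat d" by (simp add: mat_trace_def)
  ultimately show False using \<open>0 < d\<close> by simp
qed

theorem mainTheorem11:
  fixes k n :: nat and \<zeta> :: complex
    and L :: "(nat \<Rightarrow> nat list) \<Rightarrow> rep"
    and c :: "(nat \<Rightarrow> nat list) \<Rightarrow> (nat \<Rightarrow> nat list) \<Rightarrow> (nat \<Rightarrow> nat list) \<Rightarrow> nat"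
    and lam mu nu :: "nat \<Rightarrow> nat"
    and P Q :: "nat \<Rightarrow> nat list"
  assumes k: "1 \<le> k" and n: "1 \<le> n"
    and zeta_root: "\<zeta> ^ n = 1" and zeta_prim: "\<forall>j. 0 < j \<and> j < n \<longrightarrow> \<zeta> ^ j \<noteq> 1"
    and L_irr: "\<forall>R\<in>multipartitions n k. irreducible_rep n k (L R)"
    and L_distinct: "\<forall>R\<in>multipartitions n k. \<forall>S\<in>multipartitions n k.
                       iso_rep n k (L R) (L S) \<longrightarrow> R = S"
    and L_complete: "\<forall>V. irreducible_rep n k V \<longrightarrow> (\<exists>R\<in>multipartitions n k. iso_rep n k V (L R))"
    and L_trace: "\<forall>R\<in>multipartitions n k. \<forall>\<rho>\<in>Akn k n. \<forall>\<alpha>.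
                    has_shape k n R \<rho> \<and> (\<forall>i\<in>{1..k}. \<alpha> i < n) \<and> (\<forall>i. i \<notin> {1..k} \<longrightarrow> \<alpha> i = 0) \<longrightarrow>
                    mat_trace (snd (L R) (ypow \<alpha>)) = of_nat (fmulti n R) * monsym k \<rho> (\<lambda>i. \<zeta> ^ \<alpha> i)"
    and c_struct: "\<forall>R\<in>multipartitions n k. \<forall>S\<in>multipartitions n k.
                    \<exists>xs. set xs \<subseteq> multipartitions n k \<and>
                         (\<forall>T\<in>multipartitions n k. count_list xs T = c R S T) \<and>
                         iso_rep n k (tensor_rep (L R) (L S)) (dsum_list (map L xs))"
    and lam: "lam \<in> Akn k n" and mu: "mu \<in> Akn k n" and nu: "nu \<in> Akn k n"
    and P: "P \<in> multipartitions n k" and P_shape: "has_shape k n P lam"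
    and Q: "Q \<in> multipartitions n k" and Q_shape: "has_shape k n Q mu"
  shows "real (Ncoef k n nu lam mu) =
         (\<Sum>T\<in>{T \<in> multipartitions n k. has_shape k n T nu}.
            real (c P Q T) * real (fmulti n T) / (real (fmulti n P) * real (fmulti n Q)))"
proof -
  let ?M = "multipartitions n k"
  let ?G = "GG {1..k} n"
  let ?W = "\<lambda>\<alpha>. \<Prod>i\<in>{1..k}. \<zeta> ^ (\<alpha> i * (n - nu i))"
  define sh where "sh T = (SOME rho. rho \<in> Akn k n \<and> has_shape k n T rho)" for T
  have sh: "sh T \<in> Akn k n \<and> has_shape k n T (sh T)" if TM: "T \<in> ?M" for T
  proof -
    obtain rho where "rho \<in> Akn k n" "has_shape k n T rho" using shape_exists[OF TM] by blast
    then have "rho \<in> Akn k n \<and> has_shape k n T rho" by simp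
    then show ?thesis unfolding sh_def by (rule someI[where P="\<lambda>r. r \<in> Akn k n \<and> has_shape k n T r"])
  qed
  have sh_iff: "sh T = nu \<longleftrightarrow> has_shape k n T nu" if T: "T \<in> ?M" for T
  proof
    assume "sh T = nu" then show "has_shape k n T nu" using sh[OF T] by simp
  next
    assume h: "has_shape k n T nu"
    show "sh T = nu"
      by (rule Akn_eq_mult[OF conjunct1[OF sh[OF T]] nu]) (use h sh[OF T] in \<open>auto simp: has_shape_def\<close>)
  qed
  obtain xs where xs1: "set xs \<subseteq> ?M" and xs2: "\<forall>T\<in>?M. count_list xs T = c P Q T"
    and xs3: "iso_rep n k (tensor_rep (L P) (L Q)) (dsum_list (map L xs))"
    using c_struct P Q by blast
  have trR: "mat_trace (snd (L R) (ypow \<alpha>)) = of_nat (fmulti n R) * monsym k rho (\<lambda>i. \<zeta> ^ \<alpha> i)"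
    if "R \<in> ?M" "rho \<in> Akn k n" "has_shape k n R rho" "\<alpha> \<in> ?G" for R rho \<alpha>
    using L_trace that by (auto simp: GG_def)
  have gS: "ypow \<alpha> \<in> Snk n k" if "\<alpha> \<in> ?G" for \<alpha>
    using that by (auto simp: GG_def ypow_def Snk_def permutes_id)
  have ident: "(of_nat (fmulti n P) * monsym k lam (\<lambda>i. \<zeta> ^ \<alpha> i)) * (of_nat (fmulti n Q) * monsym k mu (\<lambda>i. \<zeta> ^ \<alpha> i))
      = (\<Sum>T\<in>set xs. of_nat (count_list xs T) * (of_nat (fmulti n T) * monsym k (sh T) (\<lambda>i. \<zeta> ^ \<alpha> i)))"
    if a: "\<alpha> \<in> ?G" for \<alpha>
  proof -
    have "mat_trace (snd (L P) (ypow \<alpha>)) * mat_trace (snd (L Q) (ypow \<alpha>)) =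
         (\<Sum>T\<in>set xs. of_nat (count_list xs T) * mat_trace (snd (L T) (ypow \<alpha>)))"
      by (rule char_identity[OF L_irr xs1 xs3 P Q gS[OF a]])
    moreover have "mat_trace (snd (L T) (ypow \<alpha>)) = of_nat (fmulti n T) * monsym k (sh T) (\<lambda>i. \<zeta> ^ \<alpha> i)"
      if "T \<in> set xs" for T
      using trR[of T "sh T" \<alpha>] sh[of T] xs1 that a by auto
    ultimately show ?thesis using trR[OF P lam P_shape a] trR[OF Q mu Q_shape a] by simp
  qed
  have G0: "(\<lambda>_. 0) \<in> ?G" using n by (auto simp: GG_def)
  have fP: "fmulti n P \<noteq> 0"
    using fmulti_nonzero[of n k L P, OF _ trR[OF P lam P_shape G0]] L_irr P by blast
  have fQ: "fmulti n Q \<noteq> 0"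
    using fmulti_nonzero[of n k L Q, OF _ trR[OF Q mu Q_shape G0]] L_irr Q by blast
  let ?X = "set xs \<inter> {T. has_shape k n T nu}"
  have "of_nat (fmulti n P * fmulti n Q * Ncoef k n nu lam mu) * (of_nat n ^ k :: complex)
      = of_nat (fmulti n P) * of_nat (fmulti n Q) * (\<Sum>\<alpha>\<in>?G. monsym k lam (\<lambda>i. \<zeta> ^ \<alpha> i) * monsym k mu (\<lambda>i. \<zeta> ^ \<alpha> i) * ?W \<alpha>)"
    using lhs_sum[OF n zeta_root zeta_prim lam mu nu] by simp
  also have "\<dots> = (\<Sum>\<alpha>\<in>?G. (of_nat (fmulti n P) * monsym k lam (\<lambda>i. \<zeta> ^ \<alpha> i)) * (of_nat (fmulti n Q) * monsym k mu (\<lambda>i. \<zeta> ^ \<alpha> i)) * ?W \<alpha>)"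
    by (simp add: sum_distrib_left mult_ac)
  also have "\<dots> = (\<Sum>\<alpha>\<in>?G. \<Sum>T\<in>set xs. of_nat (count_list xs T) * of_nat (fmulti n T) * (monsym k (sh T) (\<lambda>i. \<zeta> ^ \<alpha> i) * ?W \<alpha>))"
  proof (intro sum.cong refl)
    fix \<alpha> assume a: "\<alpha> \<in> ?G"
    have "(of_nat (fmulti n P) * monsym k lam (\<lambda>i. \<zeta> ^ \<alpha> i)) * (of_nat (fmulti n Q) * monsym k mu (\<lambda>i. \<zeta> ^ \<alpha> i)) * ?W \<alpha>
        = (\<Sum>T\<in>set xs. of_nat (count_list xs T) * (of_nat (fmulti n T) * monsym k (sh T) (\<lambda>i. \<zeta> ^ \<alpha> i))) * ?W \<alpha>"
      by (simp only: ident[OF a])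
    also have "\<dots> = (\<Sum>T\<in>set xs. of_nat (count_list xs T) * of_nat (fmulti n T) * (monsym k (sh T) (\<lambda>i. \<zeta> ^ \<alpha> i) * ?W \<alpha>))"
      by (simp only: sum_distrib_right mult.assoc)
    finally show "(of_nat (fmulti n P) * monsym k lam (\<lambda>i. \<zeta> ^ \<alpha> i)) * (of_nat (fmulti n Q) * monsym k mu (\<lambda>i. \<zeta> ^ \<alpha> i)) * ?W \<alpha>
        = (\<Sum>T\<in>set xs. of_nat (count_list xs T) * of_nat (fmulti n T) * (monsym k (sh T) (\<lambda>i. \<zeta> ^ \<alpha> i) * ?W \<alpha>))" .
  qed
  also have "\<dots> = (\<Sum>T\<in>set xs. of_nat (count_list xs T) * of_nat (fmulti n T) * (\<Sum>\<alpha>\<in>?G. monsym k (sh T) (\<lambda>i. \<zeta> ^ \<alpha> i) * ?W \<alpha>))"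
    by (subst sum.swap) (simp add: sum_distrib_left)
  also have "\<dots> = (\<Sum>T\<in>set xs. of_nat (count_list xs T) * of_nat (fmulti n T) * (if has_shape k n T nu then of_nat n ^ k else 0))"
  proof (intro sum.cong refl)
    fix T assume T: "T \<in> set xs"
    have TM: "T \<in> ?M" using T xs1 by auto
    show "of_nat (count_list xs T) * of_nat (fmulti n T) * (\<Sum>\<alpha>\<in>?G. monsym k (sh T) (\<lambda>i. \<zeta> ^ \<alpha> i) * ?W \<alpha>)
        = of_nat (count_list xs T) * of_nat (fmulti n T) * (if has_shape k n T nu then of_nat n ^ k else (0::complex))"
      using rhs_sum[OF n zeta_root zeta_prim conjunct1[OF sh[OF TM]] nu] sh_iff[OF TM] by simp
  qed
  also have "\<dots> = (\<Sum>T\<in>set xs. if has_shape k n T nu then of_nat (count_list xs T * fmulti n T) * of_nat n ^ k else 0)"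
    by (intro sum.cong refl) simp
  also have "\<dots> = (\<Sum>T\<in>?X. of_nat (count_list xs T * fmulti n T) * of_nat n ^ k)"
    by (simp add: sum.inter_filter[symmetric] Int_def)
  also have "\<dots> = of_nat (\<Sum>T\<in>?X. count_list xs T * fmulti n T) * of_nat n ^ k"
    by (simp add: sum_distrib_right)
  finally have "of_nat (fmulti n P * fmulti n Q * Ncoef k n nu lam mu) * (of_nat n ^ k :: complex)
      = of_nat (\<Sum>T\<in>?X. count_list xs T * fmulti n T) * of_nat n ^ k" .
  moreover have nz: "(of_nat n ^ k :: complex) \<noteq> 0" using n by simp
  ultimately have "(of_nat (fmulti n P * fmulti n Q * Ncoef k n nu lam mu) :: complex)
      = of_nat (\<Sum>T\<in>?X. count_list xs T * fmulti n T)" using mult_right_cancel[OF nz] by blast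
  then have natEq: "fmulti n P * fmulti n Q * Ncoef k n nu lam mu = (\<Sum>T\<in>?X. count_list xs T * fmulti n T)"
    by (simp only: of_nat_eq_iff)
  let ?MN = "{T \<in> ?M. has_shape k n T nu}"
  have finMN: "finite ?MN" using mp_finite by simp
  have "(\<Sum>T\<in>?MN. c P Q T * fmulti n T) = (\<Sum>T\<in>?X. count_list xs T * fmulti n T)"
  proof (rule sum.mono_neutral_cong_right[OF finMN])
    show "?X \<subseteq> ?MN" using xs1 by auto
    show "\<forall>T\<in>?MN - ?X. c P Q T * fmulti n T = 0"
    proof
      fix T assume T: "T \<in> ?MN - ?X"
      then have "T \<notin> set xs" "T \<in> ?M" by auto
      then have e1: "count_list xs T = c P Q T" using xs2 by blast
      have "count_list xs T = 0" using \<open>T \<notin> set xs\<close> by (simp add: count_list_0_iff)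
      then have "c P Q T = 0" using e1 by simp
      then show "c P Q T * fmulti n T = 0" by simp
    qed
    show "\<And>T. T \<in> ?X \<Longrightarrow> c P Q T * fmulti n T = count_list xs T * fmulti n T" using xs1 xs2 by auto
  qed
  then have eq: "fmulti n P * fmulti n Q * Ncoef k n nu lam mu = (\<Sum>T\<in>?MN. c P Q T * fmulti n T)"
    using natEq by simp
  have "(\<Sum>T\<in>?MN. real (c P Q T) * real (fmulti n T) / (real (fmulti n P) * real (fmulti n Q)))
      = real (\<Sum>T\<in>?MN. c P Q T * fmulti n T) / (real (fmulti n P) * real (fmulti n Q))"
    by (simp add: sum_divide_distrib)
  also have "\<dots> = real (Ncoef k n nu lam mu)"
    unfolding eq[symmetric] using fP fQ by simp
  finally show ?thesis by simp
qed

end
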